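(* Suppose that for every $e\in E$ the restriction $p_e|_{K_{i(e)}}$ is Dini-continuous and that there exists $\delta>0$ with $p_e|_{K_{i(e)}}\ge\delta$ for all $e\in E$. Let $x_i\in K_i$ for all $1\le i\le N$ and $x\in K$. Then for every integer $m\le 0$ the measure $P^m_x$ is absolutely continuous with respect to $P^m_{x_1\dots x_N}$ on $(\Sigma,\mathcal{A}_m)$.
   Context: A contractive Markov system (CMS) with average contracting rate $0<a<1$ consists of: a finite directed multigraph $(V,E,i,t)$ with vertex set $V=\{1,\dots,N\}$, finite edge set $E$, and maps $i,t:E\to V$ giving the initial and terminal vertex of each edge; a complete metric space $(K,d)$ partitioned into non-empty Borel sets $K_1,\dots,K_N$; Borel measurable maps $w_e:K\to K$ ($e\in E$) with $w_e(K_{i(e)})\subset K_{t(e)}$; Borel measurable functions $p_e:K\to[0,\infty)$ with $\sum_{e\in E}p_e(x)=1$ for all $x\in K$ and $p_e=0$ on $K\setminus K_{i(e)}$; and such that $\sum_{e\in E}p_e(x)d(w_ex,w_ey)\leq a\,d(x,y)$ for all $x,y\in K_j$, $j=1,\dots,N$. A function $f:(X,d)\to\mathbb{R}$ is Dini-continuous if $\int_0^c\frac{\phi(t)}{t}dt<\infty$ for some $c>0$, where $\phi(t):=\sup\{|f(x)-f(y)|:d(x,y)\le t,\ x,y\in X\}$ is its modulus of uniform continuity. Let $\Sigma:=E^{\mathbb{Z}}$. For $m\le n$ the cylinder $_m[e_m,\dots,e_n]:=\{\sigma\in\Sigma:\sigma_j=e_j,\ m\le j\le n\}$. For an integer $m\le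 1$, $\mathcal{A}_m$ is the $\sigma$-algebra generated by the cylinders $_m[e_m,\dots,e_n]$, $n\ge m$. For $x\in K$, $P^m_x$ is the probability measure on $(\Sigma,\mathcal{A}_m)$ with $P^m_x(_m[e_m,\dots,e_n])=p_{e_m}(x)\,p_{e_{m+1}}(w_{e_m}x)\cdots p_{e_n}(w_{e_{n-1}}\circ\cdots\circ w_{e_m}x)$. For fixed $x_i\in K_i$, $P^m_{x_1\dots x_N}:=\int P^m_y\,d\big(\frac1N\sum_{i=1}^N\delta_{x_i}\big)(y)=\frac1N\sum_{i=1}^N P^m_{x_i}$. *)

theory Defs
  imports "HOL-Analysis.Analysis"
begin

text \<open>Contractive Markov system. The complete metric space (K,d) is the type 'a of class
complete_space (K = UNIV, d = dist), the vertices are 1..N, the edge set is E :: 'e set.\<close>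

definition cms ::
  "nat \<Rightarrow> 'e set \<Rightarrow> ('e \<Rightarrow> nat) \<Rightarrow> ('e \<Rightarrow> nat) \<Rightarrow> (nat \<Rightarrow> 'a::complete_space set)
   \<Rightarrow> ('e \<Rightarrow> 'a \<Rightarrow> 'a) \<Rightarrow> ('e \<Rightarrow> 'a \<Rightarrow> real) \<Rightarrow> real \<Rightarrow> bool" where
  "cms N E i t K w p a \<longleftrightarrow>
     finite E \<and>
     (\<forall>e\<in>E. i e \<in> {1..N} \<and> t e \<in> {1..N}) \<and>
     (\<forall>j\<in>{1..N}. K j \<noteq> {} \<and> K j \<in> sets borel) \<and>
     (\<forall>j\<in>{1..N}. \<forall>k\<in>{1..N}. j \<noteq> k \<longrightarrow> K j \<inter> K k = {}) \<and>
     (\<Union>j\<in>{1..N}. K j) = UNIV \<and>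
     (\<forall>e\<in>E. w e \<in> borel_measurable borel \<and> w e ` K (i e) \<subseteq> K (t e)) \<and>
     (\<forall>e\<in>E. p e \<in> borel_measurable borel \<and> (\<forall>x. p e x \<ge> 0) \<and>
              (\<forall>x. x \<notin> K (i e) \<longrightarrow> p e x = 0)) \<and>
     (\<forall>x. (\<Sum>e\<in>E. p e x) = 1) \<and>
     0 < a \<and> a < 1 \<and>
     (\<forall>j\<in>{1..N}. \<forall>x\<in>K j. \<forall>y\<in>K j.
        (\<Sum>e\<in>E. p e x * dist (w e x) (w e y)) \<le> a * dist x y)"

text \<open>Modulus of uniform continuity of f on S (values in extended nonnegative reals,
so that an infinite supremum is allowed) and Dini continuity of f restricted to S.\<close>

definition modulus :: "'a::metric_space set \<Rightarrow> ('a \<Rightarrow> real) \<Rightarrow> real \<Rightarrow> ennreal" where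
  "modulus S f r = (SUP xy \<in> {(x, y). x \<in> S \<and> y \<in> S \<and> dist x y \<le> r}.
                       ennreal \<bar>f (fst xy) - f (snd xy)\<bar>)"

definition dini_continuous_on :: "'a::metric_space set \<Rightarrow> ('a \<Rightarrow> real) \<Rightarrow> bool" where
  "dini_continuous_on S f \<longleftrightarrow>
     (\<exists>c>0. (\<integral>\<^sup>+ r \<in> {0<..c}. modulus S f r / ennreal r \<partial>lborel) < \<infinity>)"

text \<open>Sequence space Sigma = E^Z, cylinders starting at position m, sigma-algebra A_m.
A cylinder m[e_m,...,e_n] is given by the nonempty list [e_m,...,e_n].\<close>

definition Sig :: "'e set \<Rightarrow> (int \<Rightarrow> 'e) set" where
  "Sig E = {\<sigma>. \<forall>j. \<sigma> j \<in> E}"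

definition cyl :: "'e set \<Rightarrow> int \<Rightarrow> 'e list \<Rightarrow> (int \<Rightarrow> 'e) set" where
  "cyl E m es = {\<sigma> \<in> Sig E. \<forall>k < length es. \<sigma> (m + int k) = es ! k}"

definition Am :: "'e set \<Rightarrow> int \<Rightarrow> (int \<Rightarrow> 'e) measure" where
  "Am E m = sigma (Sig E) {cyl E m es | es. es \<noteq> [] \<and> set es \<subseteq> E}"

fun cylprob :: "('e \<Rightarrow> 'a \<Rightarrow> 'a) \<Rightarrow> ('e \<Rightarrow> 'a \<Rightarrow> real) \<Rightarrow> 'a \<Rightarrow> 'e list \<Rightarrow> real" where
  "cylprob w p x [] = 1"
| "cylprob w p x (e # es) = p e x * cylprob w p (w e x) es"

definition is_Pm :: "'e set \<Rightarrow> ('e \<Rightarrow> 'a \<Rightarrow> 'a) \<Rightarrow> ('e \<Rightarrow> 'a \<Rightarrow> real) \<Rightarrow> int \<Rightarrow> 'a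
                      \<Rightarrow> (int \<Rightarrow> 'e) measure \<Rightarrow> bool" where
  "is_Pm E w p m x M \<longleftrightarrow>
     sets M = sets (Am E m) \<and> emeasure M (space M) = 1 \<and>
     (\<forall>es. es \<noteq> [] \<and> set es \<subseteq> E \<longrightarrow> emeasure M (cyl E m es) = ennreal (cylprob w p x es))"

definition Pm :: "'e set \<Rightarrow> ('e \<Rightarrow> 'a \<Rightarrow> 'a) \<Rightarrow> ('e \<Rightarrow> 'a \<Rightarrow> real) \<Rightarrow> int \<Rightarrow> 'a
                  \<Rightarrow> (int \<Rightarrow> 'e) measure" where
  "Pm E w p m x = (SOME M. is_Pm E w p m x M)"

definition Pm_mix :: "nat \<Rightarrow> 'e set \<Rightarrow> ('e \<Rightarrow> 'a \<Rightarrow> 'a) \<Rightarrow> ('e \<Rightarrow> 'a \<Rightarrow> real) \<Rightarrow> int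
                      \<Rightarrow> (nat \<Rightarrow> 'a) \<Rightarrow> (int \<Rightarrow> 'e) measure" where
  "Pm_mix N E w p m xs = measure_of (Sig E) (sets (Am E m))
      (\<lambda>A. (\<Sum>j = 1..N. emeasure (Pm E w p m (xs j)) A) / of_nat N)"

end

theory Submission
  imports Defs "HOL-Probability.Probability"
begin

definition pre :: "int \<Rightarrow> nat \<Rightarrow> (int \<Rightarrow> 'e) \<Rightarrow> 'e list" where
  "pre m n \<sigma> = map (\<lambda>k. \<sigma> (m + int k)) [0..<n]"

lemma length_pre[simp]: "length (pre m n \<sigma>) = n"
  by (simp add: pre_def)

lemma take_pre: "k \<le> n \<Longrightarrow> take k (pre m n \<sigma>) = pre m k \<sigma>"
  by (simp add: pre_def take_map)

lemma pre_eq_iff: "pre m n \<sigma> = es \<longleftrightarrow> length es = n \<and> (\<forall>k<n. \<sigma> (m + int k) = es ! k)"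
  unfolding pre_def list_eq_iff_nth_eq by auto

lemma cyl_eq: "cyl E m es = {\<sigma> \<in> Sig E. pre m (length es) \<sigma> = es}"
  unfolding cyl_def pre_eq_iff by simp

definition lsts :: "'e set \<Rightarrow> nat \<Rightarrow> 'e list set" where
  "lsts E n = {es. set es \<subseteq> E \<and> length es = n}"

lemma finite_lsts: "finite E \<Longrightarrow> finite (lsts E n)"
  unfolding lsts_def by (rule finite_lists_length_eq)

lemma pre_in_lsts: "\<sigma> \<in> Sig E \<Longrightarrow> pre m n \<sigma> \<in> lsts E n"
  by (auto simp: lsts_def pre_def Sig_def)

fun sel :: "('e \<Rightarrow> 'a \<Rightarrow> real) \<Rightarrow> 'e \<Rightarrow> 'a \<Rightarrow> 'e list \<Rightarrow> real \<Rightarrow> real \<Rightarrow> 'e" where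
  "sel p d x [] s u = d"
| "sel p d x (e # es) s u = (if u < s + p e x then e else sel p d x es (s + p e x) u)"

lemma sel_pred: "Measurable.pred borel (\<lambda>u. sel p d x l s u = e)"
proof (induction l arbitrary: s)
  case Nil
  then show ?case by simp
next
  case (Cons e0 es)
  have eq: "(\<lambda>u. sel p d x (e0 # es) s u = e) =
     (\<lambda>u. if u < s + p e0 x then e0 = e else sel p d x es (s + p e0 x) u = e)"
    by (rule ext) simp
  show ?case unfolding eq using Cons.IH[of "s + p e0 x"] by measurable
qed

lemma sel_sets: "{u. sel p d x l s u = e} \<in> sets borel"
  using sel_pred[of p d x l s e] by (simp add: pred_def)

lemma sel_in: "d \<in> E \<Longrightarrow> set l \<subseteq> E \<Longrightarrow> sel p d x l s u \<in> E"
  by (induction l arbitrary: s) auto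

lemma sel_lower:
  assumes "distinct l" "e \<in> set l" "\<forall>e'\<in>set l. p e' x \<ge> 0"
    and "s + sum_list (map (\<lambda>e'. p e' x) (takeWhile (\<lambda>e'. e' \<noteq> e) l)) \<le> u"
    and "u < s + sum_list (map (\<lambda>e'. p e' x) (takeWhile (\<lambda>e'. e' \<noteq> e) l)) + p e x"
  shows "sel p d x l s u = e"
  using assms
proof (induction l arbitrary: s)
  case Nil
  then show ?case by simp
next
  case (Cons e0 es)
  show ?case
  proof (cases "e0 = e")
    case True
    then show ?thesis using Cons.prems by simp
  next
    case False
    have nn: "0 \<le> sum_list (map (\<lambda>e'. p e' x) (takeWhile (\<lambda>e'. e' \<noteq> e) es))"
      using Cons.prems(3) by (intro sum_list_nonneg) (auto dest: set_takeWhileD)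
    have "\<not> u < s + p e0 x" using False nn Cons.prems(4) by simp
    moreover have "sel p d x es (s + p e0 x) u = e"
      apply (rule Cons.IH)
      using Cons.prems False by (auto simp: add.assoc)
    ultimately show ?thesis by simp
  qed
qed


abbreviation U :: "real measure" where "U \<equiv> uniform_measure lborel {0..1::real}"

lemma U_prob: "prob_space U"
  by (rule prob_space_uniform_measure) auto

lemma sets_U[simp, measurable_cong]: "sets U = sets borel"
  by simp

lemma sel_prob:
  assumes "finite E" "distinct l" "set l = E" "\<forall>e\<in>E. p e x \<ge> 0" "(\<Sum>e\<in>E. p e x) = 1"
    and "e \<in> E"
  shows "emeasure U {u. sel p d x l 0 u = e} = ennreal (p e x)"
proof -
  interpret U: prob_space U by (rule U_prob)
  define a where "a e = sum_list (map (\<lambda>e'. p e' x) (takeWhile (\<lambda>e'. e' \<noteq> e) l))" for e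
  have a_ok: "0 \<le> a e \<and> a e + p e x \<le> 1" if "e \<in> E" for e
  proof -
    obtain xs ys where l: "l = xs @ e # ys" and nxs: "e \<notin> set xs"
      using split_list_first[of e l] \<open>e \<in> E\<close> assms(3) by auto
    have tw: "takeWhile (\<lambda>e'. e' \<noteq> e) l = xs"
      unfolding l using nxs by (subst takeWhile_append2) auto
    have "1 = sum_list (map (\<lambda>e'. p e' x) l)"
      using assms by (simp add: sum_list_distinct_conv_sum_set)
    also have "\<dots> = a e + p e x + sum_list (map (\<lambda>e'. p e' x) ys)"
      unfolding a_def tw by (simp add: l)
    finally have "1 = a e + p e x + sum_list (map (\<lambda>e'. p e' x) ys)" .
    moreover have "0 \<le> sum_list (map (\<lambda>e'. p e' x) ys)"
      using assms(3,4) l by (intro sum_list_nonneg) auto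
    moreover have "0 \<le> a e"
      unfolding a_def tw using assms(3,4) l by (intro sum_list_nonneg) auto
    ultimately show ?thesis by linarith
  qed
  have lower: "p e x \<le> measure U {u. sel p d x l 0 u = e}" if "e \<in> E" for e
  proof -
    have sub: "{a e..<a e + p e x} \<subseteq> {u. sel p d x l 0 u = e}"
    proof
      fix u assume "u \<in> {a e..<a e + p e x}"
      then show "u \<in> {u. sel p d x l 0 u = e}"
        using sel_lower[of l e p x 0 u d] assms that unfolding a_def by auto
    qed
    have "emeasure U {a e..<a e + p e x} = ennreal (p e x)"
    proof -
      have "{0..1} \<inter> {a e..<a e + p e x} = {a e..<a e + p e x}"
        using a_ok[OF that] by auto
      then show ?thesis
        using assms(4) that by (subst emeasure_uniform_measure) (auto simp: divide_ennreal_def)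
    qed
    then have "measure U {a e..<a e + p e x} = p e x"
      using assms(4) that by (simp add: U.emeasure_eq_measure)
    moreover have "measure U {a e..<a e + p e x} \<le> measure U {u. sel p d x l 0 u = e}"
      using sub sel_sets by (intro U.finite_measure_mono) auto
    ultimately show ?thesis by simp
  qed
  have "(\<Sum>e\<in>E. measure U {u. sel p d x l 0 u = e}) = measure U (\<Union>e\<in>E. {u. sel p d x l 0 u = e})"
    using assms(1) sel_sets by (intro U.finite_measure_finite_Union[symmetric]) (auto simp: disjoint_family_on_def)
  also have "\<dots> \<le> 1" by (rule U.prob_le_1)
  finally have "(\<Sum>e\<in>E. measure U {u. sel p d x l 0 u = e} - p e x) \<le> 0"
    using assms(5) by (simp add: sum_subtractf)
  moreover have "\<forall>e\<in>E. 0 \<le> measure U {u. sel p d x l 0 u = e} - p e x"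
    using lower by auto
  ultimately have "\<forall>e\<in>E. measure U {u. sel p d x l 0 u = e} - p e x = 0"
    using sum_nonneg_eq_0_iff[OF assms(1)] sum_nonneg[of E "\<lambda>e. measure U {u. sel p d x l 0 u = e} - p e x"]
    by (metis (no_types, lifting) order_antisym)
  then show ?thesis
    using assms(6) by (simp add: U.emeasure_eq_measure)
qed


primcorec chain :: "('a \<Rightarrow> real \<Rightarrow> 'e) \<Rightarrow> ('e \<Rightarrow> 'a \<Rightarrow> 'a) \<Rightarrow> 'a \<Rightarrow> real stream \<Rightarrow> 'e stream" where
  "chain F w x \<omega> = F x (shd \<omega>) ## chain F w (w (F x (shd \<omega>)) x) (stl \<omega>)"

lemma chain_in: "(\<And>x u. F x u \<in> E) \<Longrightarrow> chain F w x \<omega> !! k \<in> E"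
proof (induction k arbitrary: x \<omega>)
  case 0
  then show ?case by simp
next
  case (Suc k)
  then show ?case by simp
qed

lemma stake_chain_Suc:
  "stake (Suc n) (chain F w x \<omega>) = F x (shd \<omega>) # stake n (chain F w (w (F x (shd \<omega>)) x) (stl \<omega>))"
  by simp

lemma space_SU: "space (stream_space U) = UNIV"
  by (simp add: space_stream_space streams_UNIV)

lemma cylprob_nonneg: "(\<forall>e\<in>E. \<forall>y. 0 \<le> p e y) \<Longrightarrow> set es \<subseteq> E \<Longrightarrow> 0 \<le> cylprob w p x es"
  by (induction es arbitrary: x) auto

lemma chain_cyl:
  assumes pnn: "\<forall>e\<in>E. \<forall>y. 0 \<le> p e y"
    and Fs: "\<And>x e. {u. F x u = e} \<in> sets borel"
    and Fp: "\<And>x e. e \<in> E \<Longrightarrow> emeasure U {u. F x u = e} = ennreal (p e x)"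
    and "set es \<subseteq> E"
  shows "{\<omega>. stake (length es) (chain F w x \<omega>) = es} \<in> sets (stream_space U) \<and>
         emeasure (stream_space U) {\<omega>. stake (length es) (chain F w x \<omega>) = es} = ennreal (cylprob w p x es)"
  using assms(4)
proof (induction es arbitrary: x)
  case Nil
  interpret U: prob_space U by (rule U_prob)
  interpret S: prob_space "stream_space U" by (rule U.prob_space_stream_space)
  show ?case using S.emeasure_space_1 sets.top[of "stream_space U"] by (simp add: space_SU)
next
  case (Cons e es)
  interpret U: prob_space U by (rule U_prob)
  interpret S: prob_space "stream_space U" by (rule U.prob_space_stream_space)
  define Y where "Y = {\<omega>. stake (length es) (chain F w (w e x) \<omega>) = es}"
  have Y: "Y \<in> sets (stream_space U)" "emeasure (stream_space U) Y = ennreal (cylprob w p (w e x) es)"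
    using Cons by (auto simp: Y_def)
  have X: "{\<omega>. stake (length (e # es)) (chain F w x \<omega>) = e # es} =
      (shd -` {u. F x u = e} \<inter> space (stream_space U)) \<inter> (stl -` Y \<inter> space (stream_space U))"
    by (auto simp: Y_def space_SU)
  have Xs: "(shd -` {u. F x u = e} \<inter> space (stream_space U)) \<inter> (stl -` Y \<inter> space (stream_space U)) \<in> sets (stream_space U)"
  proof (rule sets.Int)
    show "shd -` {u. F x u = e} \<inter> space (stream_space U) \<in> sets (stream_space U)"
      by (rule measurable_sets[OF measurable_shd]) (simp add: Fs)
    show "stl -` Y \<inter> space (stream_space U) \<in> sets (stream_space U)"
      by (rule measurable_sets[OF measurable_stl Y(1)])
  qed
  have "emeasure (stream_space U) ((shd -` {u. F x u = e} \<inter> space (stream_space U)) \<inter> (stl -` Y \<inter> space (stream_space U)))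
     = (\<integral>\<^sup>+t. emeasure (stream_space U) {\<omega>\<in>space (stream_space U). t ## \<omega> \<in> (shd -` {u. F x u = e} \<inter> space (stream_space U)) \<inter> (stl -` Y \<inter> space (stream_space U))} \<partial>U)"
    by (rule U.emeasure_stream_space[OF Xs])
  also have "\<dots> = (\<integral>\<^sup>+t. emeasure (stream_space U) Y * indicator {u. F x u = e} t \<partial>U)"
  proof (rule nn_integral_cong)
    fix t
    show "emeasure (stream_space U) {\<omega>\<in>space (stream_space U). t ## \<omega> \<in> (shd -` {u. F x u = e} \<inter> space (stream_space U)) \<inter> (stl -` Y \<inter> space (stream_space U))}
        = emeasure (stream_space U) Y * indicator {u. F x u = e} t"
      by (cases "F x t = e") (auto simp: space_SU)
  qed
  also have "\<dots> = emeasure (stream_space U) Y * emeasure U {u. F x u = e}"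
    using Fs by (subst nn_integral_cmult_indicator) auto
  also have "\<dots> = ennreal (cylprob w p x (e # es))"
  proof -
    have "e \<in> E" using Cons.prems by simp
    then have "emeasure U {u. F x u = e} = ennreal (p e x)" by (rule Fp)
    then show ?thesis
      using Y(2) Cons.prems pnn by (simp add: ennreal_mult'[symmetric] mult.commute)
  qed
  finally show ?case using X Xs by simp
qed


section \<open>Existence of P^m_x\<close>

lemma cyl_subset: "cyl E m es \<subseteq> Sig E"
  by (auto simp: cyl_def)

lemma Am_gen_subset: "{cyl E m es | es. es \<noteq> [] \<and> set es \<subseteq> E} \<subseteq> Pow (Sig E)"
  using cyl_subset by blast

lemma space_Am: "space (Am E m) = Sig E"
  unfolding Am_def using Am_gen_subset by (rule space_measure_of)

lemma sets_Am: "sets (Am E m) = sigma_sets (Sig E) {cyl E m es | es. es \<noteq> [] \<and> set es \<subseteq> E}"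
  unfolding Am_def using Am_gen_subset by (rule sets_measure_of)

lemma cyl_in_Am: "es \<noteq> [] \<Longrightarrow> set es \<subseteq> E \<Longrightarrow> cyl E m es \<in> sets (Am E m)"
  unfolding sets_Am by (rule sigma_sets.Basic) blast

definition toPath :: "int \<Rightarrow> 'e \<Rightarrow> 'e stream \<Rightarrow> (int \<Rightarrow> 'e)" where
  "toPath m e0 s = (\<lambda>j. if m \<le> j then s !! nat (j - m) else e0)"

lemma pre_toPath: "pre m n (toPath m e0 s) = stake n s"
  unfolding pre_eq_iff by (auto simp: toPath_def stake_nth)

lemma cms_finite: "cms N E i t K w p a \<Longrightarrow> finite E"
  by (simp add: cms_def)

lemma cms_pnn: "cms N E i t K w p a \<Longrightarrow> \<forall>e\<in>E. \<forall>y. 0 \<le> p e y"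
  by (simp add: cms_def)

lemma cms_sum1: "cms N E i t K w p a \<Longrightarrow> (\<Sum>e\<in>E. p e y) = 1"
  by (simp add: cms_def)

lemma cms_E_ne: "cms N E i t K w p a \<Longrightarrow> E \<noteq> {}"
  using cms_sum1[of N E i t K w p a undefined] by auto

lemma exists_Pm:
  assumes cms: "cms N E i t K w p a"
  shows "\<exists>M. is_Pm E w p m x M"
proof -
  have fin: "finite E" using cms_finite[OF cms] .
  obtain l where l: "set l = E" "distinct l" using finite_distinct_list[OF fin] by blast
  obtain e0 where e0: "e0 \<in> E" using cms_E_ne[OF cms] by blast
  define F where "F = (\<lambda>y u. sel p e0 y l 0 u)"
  have Fs: "\<And>y e. {u. F y u = e} \<in> sets borel" unfolding F_def by (rule sel_sets)
  have Fp: "\<And>y e. e \<in> E \<Longrightarrow> emeasure U {u. F y u = e} = ennreal (p e y)"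
    unfolding F_def using fin l cms_pnn[OF cms] cms_sum1[OF cms]
    by (intro sel_prob) auto
  have FE: "\<And>y u. F y u \<in> E" unfolding F_def using e0 l by (intro sel_in) auto
  define f where "f = (\<lambda>\<omega>. toPath m e0 (chain F w x \<omega>))"
  have fSig: "f \<omega> \<in> Sig E" for \<omega>
    unfolding f_def Sig_def toPath_def using chain_in[OF FE] e0 by auto
  have pre_f: "pre m n (f \<omega>) = stake n (chain F w x \<omega>)" for n \<omega>
    unfolding f_def by (rule pre_toPath)
  have pre_cyl: "f -` cyl E m es \<inter> space (stream_space U) = {\<omega>. stake (length es) (chain F w x \<omega>) = es}" for es
    using fSig by (auto simp: cyl_eq pre_f space_SU)
  have fmeas: "f \<in> measurable (stream_space U) (Am E m)"
    unfolding Am_def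
  proof (rule measurable_measure_of[OF Am_gen_subset])
    show "f \<in> space (stream_space U) \<rightarrow> Sig E" using fSig by auto
  next
    fix y assume "y \<in> {cyl E m es | es. es \<noteq> [] \<and> set es \<subseteq> E}"
    then obtain es where y: "y = cyl E m es" "set es \<subseteq> E" by blast
    show "f -` y \<inter> space (stream_space U) \<in> sets (stream_space U)"
      unfolding y(1) pre_cyl using chain_cyl[OF cms_pnn[OF cms] Fs Fp y(2), of w x] by blast
  qed
  interpret U: prob_space U by (rule U_prob)
  interpret S: prob_space "stream_space U" by (rule U.prob_space_stream_space)
  define M where "M = distr (stream_space U) (Am E m) f"
  interpret M: prob_space M unfolding M_def by (rule S.prob_space_distr[OF fmeas])
  have "is_Pm E w p m x M"
    unfolding is_Pm_def
  proof (intro conjI allI impI)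
    show "sets M = sets (Am E m)" by (simp add: M_def)
    show "emeasure M (space M) = 1" by (rule M.emeasure_space_1)
    fix es :: "'a list" assume es: "es \<noteq> [] \<and> set es \<subseteq> E"
    have "emeasure M (cyl E m es) = emeasure (stream_space U) (f -` cyl E m es \<inter> space (stream_space U))"
      unfolding M_def using es by (intro emeasure_distr[OF fmeas] cyl_in_Am) auto
    also have "\<dots> = ennreal (cylprob w p x es)"
      unfolding pre_cyl using chain_cyl[OF cms_pnn[OF cms] Fs Fp, of es w x] es by blast
    finally show "emeasure M (cyl E m es) = ennreal (cylprob w p x es)" .
  qed
  then show ?thesis by blast
qed

lemma Pm_is: "cms N E i t K w p a \<Longrightarrow> is_Pm E w p m x (Pm E w p m x)"
  unfolding Pm_def using exists_Pm by (rule someI_ex)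


definition Bs :: "'e set \<Rightarrow> int \<Rightarrow> nat \<Rightarrow> 'e list set \<Rightarrow> (int \<Rightarrow> 'e) set" where
  "Bs E m n L = {\<sigma> \<in> Sig E. pre m n \<sigma> \<in> L}"

lemma Bs_lift: "n \<le> k \<Longrightarrow> Bs E m n L = Bs E m k {l. take n l \<in> L}"
  by (auto simp: Bs_def take_pre)

lemma Bs_UN: "Bs E m n L = (\<Union>es\<in>L \<inter> lsts E n. {\<sigma> \<in> Sig E. pre m n \<sigma> = es})"
  using pre_in_lsts by (fastforce simp: Bs_def)

lemma Cs_Am:
  assumes "es \<in> lsts E n"
  shows "{\<sigma> \<in> Sig E. pre m n \<sigma> = es} \<in> sets (Am E m)"
proof (cases "n = 0")
  case True
  then have "{\<sigma> \<in> Sig E. pre m n \<sigma> = es} = space (Am E m)"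
    using assms by (auto simp: space_Am lsts_def pre_def)
  then show ?thesis by simp
next
  case False
  then have "{\<sigma> \<in> Sig E. pre m n \<sigma> = es} = cyl E m es" "es \<noteq> []" "set es \<subseteq> E"
    using assms by (auto simp: cyl_eq lsts_def)
  then show ?thesis using cyl_in_Am by metis
qed

lemma Bs_Am: "finite E \<Longrightarrow> Bs E m n L \<in> sets (Am E m)"
  unfolding Bs_UN
  by (intro sets.finite_UN) (auto intro: Cs_Am finite_lsts)

lemma isPm_space: "is_Pm E w p m x M \<Longrightarrow> space M = Sig E"
  unfolding is_Pm_def using sets_eq_imp_space_eq space_Am by metis

lemma Cs_emeasure:
  assumes M: "is_Pm E w p m x M" and es: "es \<in> lsts E n"
  shows "emeasure M {\<sigma> \<in> Sig E. pre m n \<sigma> = es} = ennreal (cylprob w p x es)"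
proof (cases "n = 0")
  case True
  then have "{\<sigma> \<in> Sig E. pre m n \<sigma> = es} = space M" "es = []"
    using es isPm_space[OF M] by (auto simp: lsts_def pre_def)
  then show ?thesis using M by (simp add: is_Pm_def)
next
  case False
  then have "{\<sigma> \<in> Sig E. pre m n \<sigma> = es} = cyl E m es" "es \<noteq> []" "set es \<subseteq> E"
    using es by (auto simp: cyl_eq lsts_def)
  then show ?thesis using M by (simp add: is_Pm_def)
qed

lemma Bs_emeasure:
  assumes M: "is_Pm E w p m x M" and fin: "finite E"
  shows "emeasure M (Bs E m n L) = (\<Sum>es\<in>L \<inter> lsts E n. ennreal (cylprob w p x es))"
proof -
  have sM: "sets M = sets (Am E m)" using M by (simp add: is_Pm_def)
  have "(\<Sum>es\<in>L \<inter> lsts E n. emeasure M {\<sigma> \<in> Sig E. pre m n \<sigma> = es}) =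
        emeasure M (\<Union>es\<in>L \<inter> lsts E n. {\<sigma> \<in> Sig E. pre m n \<sigma> = es})"
    by (rule sum_emeasure) (auto simp: sM disjoint_family_on_def fin finite_lsts intro: Cs_Am)
  moreover have "(\<Sum>es\<in>L \<inter> lsts E n. emeasure M {\<sigma> \<in> Sig E. pre m n \<sigma> = es}) =
      (\<Sum>es\<in>L \<inter> lsts E n. ennreal (cylprob w p x es))"
    by (rule sum.cong) (auto intro: Cs_emeasure[OF M])
  ultimately show ?thesis
    unfolding Bs_UN by simp
qed

definition RB :: "'e set \<Rightarrow> int \<Rightarrow> (int \<Rightarrow> 'e) set set" where
  "RB E m = {Bs E m n L | n L. True}"

lemma ring_RB: "ring_of_sets (Sig E) (RB E m)"
  unfolding ring_of_sets_iff
proof (intro conjI ballI)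
  show "RB E m \<subseteq> Pow (Sig E)" by (auto simp: RB_def Bs_def)
  show "{} \<in> RB E m" unfolding RB_def by (rule CollectI, rule exI[of _ 0], rule exI[of _ "{}"]) (simp add: Bs_def)
next
  fix A B assume A: "A \<in> RB E m" and B: "B \<in> RB E m"
  then obtain n L n' L' where AB: "A = Bs E m n L" "B = Bs E m n' L'" by (auto simp: RB_def)
  let ?k = "max n n'"
  have A': "A = Bs E m ?k {l. take n l \<in> L}" unfolding AB by (rule Bs_lift) simp
  have B': "B = Bs E m ?k {l. take n' l \<in> L'}" unfolding AB by (rule Bs_lift) simp
  have "A \<union> B = Bs E m ?k ({l. take n l \<in> L} \<union> {l. take n' l \<in> L'})"
    unfolding A' B' by (auto simp: Bs_def)
  then show "A \<union> B \<in> RB E m" by (auto simp: RB_def)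
  have "A - B = Bs E m ?k ({l. take n l \<in> L} - {l. take n' l \<in> L'})"
    unfolding A' B' by (auto simp: Bs_def)
  then show "A - B \<in> RB E m" by (auto simp: RB_def)
qed

lemma Sig_RB: "Sig E \<in> RB E m"
proof -
  have "Sig E = Bs E m 0 UNIV" by (simp add: Bs_def)
  then show ?thesis by (auto simp: RB_def)
qed

lemma sets_Am_RB: "finite E \<Longrightarrow> sets (Am E m) = sigma_sets (Sig E) (RB E m)"
proof
  assume fin: "finite E"
  show "sigma_sets (Sig E) (RB E m) \<subseteq> sets (Am E m)"
    using sets.sigma_sets_subset[of "RB E m" "Am E m"] Bs_Am[OF fin] by (auto simp: RB_def space_Am)
  have "{cyl E m es | es. es \<noteq> [] \<and> set es \<subseteq> E} \<subseteq> RB E m"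
  proof
    fix y assume "y \<in> {cyl E m es | es. es \<noteq> [] \<and> set es \<subseteq> E}"
    then obtain es where "y = cyl E m es" by blast
    then have "y = Bs E m (length es) {es}" by (auto simp: cyl_eq Bs_def)
    then show "y \<in> RB E m" by (auto simp: RB_def)
  qed
  then show "sets (Am E m) \<subseteq> sigma_sets (Sig E) (RB E m)"
    unfolding sets_Am by (rule sigma_sets_mono')
qed


section \<open>Finite measures agree with the outer measure of a generating ring\<close>

lemma emeasure_outer:
  assumes R: "ring_of_sets \<Omega> R" and sQ: "sets Q = sigma_sets \<Omega> R" and OR: "\<Omega> \<in> R"
    and fin: "emeasure Q \<Omega> \<noteq> \<infinity>" and A: "A \<in> sets Q"
  shows "emeasure Q A = outer_measure R (emeasure Q) A"
proof -
  interpret R: ring_of_sets \<Omega> R by (rule R)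
  let ?f = "emeasure Q"
  have RQ: "R \<subseteq> sets Q" using sQ by auto
  have posf: "positive R ?f" by (simp add: positive_def)
  have ca: "countably_additive R ?f"
    using emeasure_countably_additive[of Q] RQ
    unfolding countably_additive_def by blast
  have inc: "increasing R ?f"
    by (metis R.additive_increasing ca R.countably_additive_additive posf)
  let ?O = "outer_measure R ?f"
  define ls where "ls = lambda_system \<Omega> (Pow \<Omega>) ?O"
  have mls: "measure_space \<Omega> ls ?O"
    using sigma_algebra.caratheodory_lemma
            [OF sigma_algebra_Pow R.outer_measure_space_outer_measure [OF posf inc]]
    by (simp add: ls_def)
  hence sls: "sigma_algebra \<Omega> ls"
    by (simp add: measure_space_def)
  have "R \<subseteq> ls"
    by (simp add: ls_def)
       (metis ca posf inc R.countably_additive_additive R.algebra_subset_lambda_system)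
  hence sgs_sb: "sigma_sets \<Omega> R \<subseteq> ls"
    using sigma_algebra.sigma_sets_subset [OF sls, of "R"]
    by simp
  have ms: "measure_space \<Omega> (sigma_sets \<Omega> R) ?O"
    by (rule measure_down [OF mls], rule sigma_algebra_sigma_sets)
       (simp_all add: sgs_sb R.space_closed)
  define Q' where "Q' = measure_of \<Omega> (sigma_sets \<Omega> R) ?O"
  have sQ': "sets Q' = sigma_sets \<Omega> R"
  proof -
    have "sigma_sets \<Omega> R \<subseteq> Pow \<Omega>" using sigma_sets_into_sp[OF R.space_closed] by blast
    then show ?thesis unfolding Q'_def
      by (simp add: sets_measure_of sigma_sets_sigma_sets_eq R.space_closed)
  qed
  have eQ': "emeasure Q' B = ?O B" if "B \<in> sigma_sets \<Omega> R" for B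
    unfolding Q'_def using ms that
    by (intro emeasure_measure_of_sigma) (auto simp: measure_space_def)
  have "Q = Q'"
  proof (rule measure_eqI_generator_eq[of R \<Omega> Q Q' "\<lambda>_. \<Omega>"])
    show "Int_stable R"
      unfolding Int_stable_def using R.Int by blast
    show "R \<subseteq> Pow \<Omega>" by (rule R.space_closed)
    fix X assume "X \<in> R"
    then show "emeasure Q X = emeasure Q' X"
      using eQ'[of X] R.outer_measure_agrees[OF posf ca, of X] by auto
  qed (use fin in \<open>auto simp: sQ sQ' OR\<close>)
  then show ?thesis using eQ' A sQ by simp
qed


section \<open>Trajectories and the expected distance\<close>

fun trj :: "('e \<Rightarrow> 'a \<Rightarrow> 'a) \<Rightarrow> 'a \<Rightarrow> 'e list \<Rightarrow> 'a" where
  "trj w x [] = x"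
| "trj w x (e # es) = trj w (w e x) es"

lemma lsts_0: "lsts E 0 = {[]}"
  by (auto simp: lsts_def)

lemma lsts_Suc: "lsts E (Suc n) = (\<lambda>(e, l). e # l) ` (E \<times> lsts E n)"
proof
  show "lsts E (Suc n) \<subseteq> (\<lambda>(e, l). e # l) ` (E \<times> lsts E n)"
  proof
    fix l assume "l \<in> lsts E (Suc n)"
    then obtain e l' where "l = e # l'" "e \<in> E" "l' \<in> lsts E n"
      by (cases l) (auto simp: lsts_def)
    then show "l \<in> (\<lambda>(e, l). e # l) ` (E \<times> lsts E n)" by force
  qed
qed (auto simp: lsts_def)

lemma sum_lsts_Suc:
  assumes "finite E"
  shows "(\<Sum>l\<in>lsts E (Suc n). f l) = (\<Sum>e\<in>E. \<Sum>l\<in>lsts E n. f (e # l))"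
proof -
  have inj: "inj_on (\<lambda>(e, l). e # l) (E \<times> lsts E n)" by (auto simp: inj_on_def)
  have "(\<Sum>l\<in>lsts E (Suc n). f l) = (\<Sum>el\<in>E \<times> lsts E n. f ((\<lambda>(e, l). e # l) el))"
    unfolding lsts_Suc by (rule sum.reindex[OF inj, unfolded comp_def])
  also have "\<dots> = (\<Sum>(e, l)\<in>E \<times> lsts E n. f (e # l))"
    by (rule sum.cong) auto
  also have "\<dots> = (\<Sum>e\<in>E. \<Sum>l\<in>lsts E n. f (e # l))"
    by (rule sum.cartesian_product[symmetric])
  finally show ?thesis .
qed

definition sp :: "nat \<Rightarrow> (nat \<Rightarrow> 'a set) \<Rightarrow> 'a \<Rightarrow> 'a \<Rightarrow> bool" where
  "sp N K x y \<longleftrightarrow> (\<exists>j\<in>{1..N}. x \<in> K j \<and> y \<in> K j)"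

lemma cms_step:
  assumes cms: "cms N E i t K w p a" and sp: "sp N K x y" and e: "e \<in> E" and pe: "p e x \<noteq> 0"
  shows "x \<in> K (i e) \<and> y \<in> K (i e) \<and> sp N K (w e x) (w e y)"
proof -
  from cms have ie: "i e \<in> {1..N}" "t e \<in> {1..N}" using e by (auto simp: cms_def)
  from cms have xK: "x \<in> K (i e)" using e pe by (auto simp: cms_def)
  obtain j where j: "j \<in> {1..N}" "x \<in> K j" "y \<in> K j" using sp by (auto simp: sp_def)
  have "j = i e"
  proof (rule ccontr)
    assume "j \<noteq> i e"
    then have "K j \<inter> K (i e) = {}" using cms j(1) ie(1) by (auto simp: cms_def)
    then show False using xK j by auto
  qed
  then have yK: "y \<in> K (i e)" using j by simp
  have "w e ` K (i e) \<subseteq> K (t e)" using cms e by (simp add: cms_def)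
  then have "w e x \<in> K (t e)" "w e y \<in> K (t e)" using xK yK by auto
  then show ?thesis using xK yK ie by (auto simp: sp_def)
qed

lemma cms_contr:
  assumes cms: "cms N E i t K w p a" and sp: "sp N K x y"
  shows "(\<Sum>e\<in>E. p e x * dist (w e x) (w e y)) \<le> a * dist x y"
  using assms by (auto simp: cms_def sp_def)

lemma expected_dist:
  assumes cms: "cms N E i t K w p a" and sp: "sp N K x y"
  shows "(\<Sum>es\<in>lsts E n. cylprob w p x es * dist (trj w x es) (trj w y es)) \<le> a ^ n * dist x y"
  using sp
proof (induction n arbitrary: x y)
  case 0
  then show ?case by (simp add: lsts_0)
next
  case (Suc n)
  have fin: "finite E" using cms_finite[OF cms] .
  have pnn: "\<forall>e\<in>E. \<forall>y. 0 \<le> p e y" using cms_pnn[OF cms] .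
  have a0: "0 \<le> a" using cms by (simp add: cms_def)
  have "(\<Sum>es\<in>lsts E (Suc n). cylprob w p x es * dist (trj w x es) (trj w y es))
      = (\<Sum>e\<in>E. p e x * (\<Sum>l\<in>lsts E n. cylprob w p (w e x) l * dist (trj w (w e x) l) (trj w (w e y) l)))"
    unfolding sum_lsts_Suc[OF fin] by (simp add: sum_distrib_left mult.assoc)
  also have "\<dots> \<le> (\<Sum>e\<in>E. p e x * (a ^ n * dist (w e x) (w e y)))"
  proof (rule sum_mono)
    fix e assume e: "e \<in> E"
    show "p e x * (\<Sum>l\<in>lsts E n. cylprob w p (w e x) l * dist (trj w (w e x) l) (trj w (w e y) l))
        \<le> p e x * (a ^ n * dist (w e x) (w e y))"
    proof (cases "p e x = 0")
      case False
      then have "sp N K (w e x) (w e y)" using cms_step[OF cms Suc.prems e] by blast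
      then show ?thesis using Suc.IH pnn e by (intro mult_left_mono) auto
    qed simp
  qed
  also have "\<dots> = a ^ n * (\<Sum>e\<in>E. p e x * dist (w e x) (w e y))"
    by (simp add: sum_distrib_left algebra_simps)
  also have "\<dots> \<le> a ^ n * (a * dist x y)"
    using cms_contr[OF cms Suc.prems] a0 by (intro mult_left_mono) auto
  finally show ?case by (simp add: mult_ac)
qed

lemma bad_prob:
  assumes cms: "cms N E i t K w p a" and sp: "sp N K x y" and R: "R > 0" and b: "b > 0" "b ^ 2 = a"
  shows "(\<Sum>es\<in>lsts E n \<inter> {es. dist (trj w x es) (trj w y es) > R * b ^ n}. cylprob w p x es)
      \<le> b ^ n * dist x y / R"
proof -
  have fin: "finite E" using cms_finite[OF cms] .
  have pnn: "\<forall>e\<in>E. \<forall>y. 0 \<le> p e y" using cms_pnn[OF cms] .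
  let ?S = "lsts E n \<inter> {es. dist (trj w x es) (trj w y es) > R * b ^ n}"
  have Rb: "R * b ^ n > 0" using R b by simp
  have "(\<Sum>es\<in>?S. cylprob w p x es) \<le> (\<Sum>es\<in>?S. cylprob w p x es * dist (trj w x es) (trj w y es) / (R * b ^ n))"
  proof (rule sum_mono)
    fix es assume es: "es \<in> ?S"
    have c0: "0 \<le> cylprob w p x es" using es pnn by (intro cylprob_nonneg[of E]) (auto simp: lsts_def)
    have "1 \<le> dist (trj w x es) (trj w y es) / (R * b ^ n)" using es Rb by simp
    then have "cylprob w p x es * 1 \<le> cylprob w p x es * (dist (trj w x es) (trj w y es) / (R * b ^ n))"
      using c0 by (intro mult_left_mono) auto
    then show "cylprob w p x es \<le> cylprob w p x es * dist (trj w x es) (trj w y es) / (R * b ^ n)" by simp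
  qed
  also have "\<dots> = (\<Sum>es\<in>?S. cylprob w p x es * dist (trj w x es) (trj w y es)) / (R * b ^ n)"
    by (simp add: sum_divide_distrib)
  also have "\<dots> \<le> (\<Sum>es\<in>lsts E n. cylprob w p x es * dist (trj w x es) (trj w y es)) / (R * b ^ n)"
  proof (intro divide_right_mono sum_mono2)
    show "finite (lsts E n)" by (rule finite_lsts[OF fin])
    fix es assume "es \<in> lsts E n - ?S"
    then have "0 \<le> cylprob w p x es" using pnn by (intro cylprob_nonneg[of E]) (auto simp: lsts_def)
    then show "0 \<le> cylprob w p x es * dist (trj w x es) (trj w y es)" by simp
  qed (use Rb in auto)
  also have "\<dots> \<le> a ^ n * dist x y / (R * b ^ n)"
    using expected_dist[OF cms sp, of n] Rb by (intro divide_right_mono) auto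
  also have "\<dots> = b ^ n * dist x y / R"
  proof -
    have "a ^ n = (b * b) ^ n" using b by (simp add: power2_eq_square)
    then have "a ^ n = b ^ n * b ^ n" by (simp add: power_mult_distrib)
    then show ?thesis using b R by (simp add: field_simps)
  qed
  finally show ?thesis .
qed


lemma modulus_mono: "r \<le> r' \<Longrightarrow> modulus S f r \<le> modulus S f r'"
  unfolding modulus_def by (rule SUP_subset_mono) auto

lemma modulus_upper: "u \<in> S \<Longrightarrow> v \<in> S \<Longrightarrow> dist u v \<le> r \<Longrightarrow> ennreal \<bar>f u - f v\<bar> \<le> modulus S f r"
  unfolding modulus_def by (rule SUP_upper2[of "(u, v)"]) auto

lemma modulus_le1: "(\<And>u. 0 \<le> f u \<and> f u \<le> 1) \<Longrightarrow> modulus S f r \<le> 1"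
  unfolding modulus_def
proof (rule SUP_least)
  fix xy assume "\<And>u. 0 \<le> f u \<and> f u \<le> 1"
  then have "\<bar>f (fst xy) - f (snd xy)\<bar> \<le> 1" by (smt (verit))
  then show "ennreal \<bar>f (fst xy) - f (snd xy)\<bar> \<le> 1" by (simp add: ennreal_le_1)
qed

lemma cms_p_le1: "cms N E i t K w p a \<Longrightarrow> e \<in> E \<Longrightarrow> 0 \<le> p e u \<and> p e u \<le> 1"
proof -
  assume cms: "cms N E i t K w p a" and e: "e \<in> E"
  have "p e u \<le> (\<Sum>e\<in>E. p e u)"
    using cms e by (intro member_le_sum) (auto simp: cms_def)
  then show ?thesis using cms e by (auto simp: cms_def)
qed

definition Phi :: "'e set \<Rightarrow> ('e \<Rightarrow> nat) \<Rightarrow> (nat \<Rightarrow> 'a::metric_space set) \<Rightarrow> ('e \<Rightarrow> 'a \<Rightarrow> real) \<Rightarrow> real \<Rightarrow> real" where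
  "Phi E i K p r = (\<Sum>e\<in>E. enn2real (modulus (K (i e)) (p e) r))"

lemma Phi_nonneg: "0 \<le> Phi E i K p r"
  unfolding Phi_def by (intro sum_nonneg) auto

lemma p_diff_le_Phi:
  assumes cms: "cms N E i t K w p a" and e: "e \<in> E" and uv: "u \<in> K (i e)" "v \<in> K (i e)"
    and d: "dist u v \<le> r"
  shows "\<bar>p e u - p e v\<bar> \<le> Phi E i K p r"
proof -
  have le1: "modulus (K (i e)) (p e) r \<le> 1"
    using cms_p_le1[OF cms e] by (intro modulus_le1) auto
  have "ennreal \<bar>p e u - p e v\<bar> \<le> modulus (K (i e)) (p e) r"
    by (rule modulus_upper[OF uv d])
  then have "enn2real (ennreal \<bar>p e u - p e v\<bar>) \<le> enn2real (modulus (K (i e)) (p e) r)"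
    using le1 by (intro enn2real_mono) (auto simp: le_less_trans[OF le1])
  then have "\<bar>p e u - p e v\<bar> \<le> enn2real (modulus (K (i e)) (p e) r)" by simp
  also have "\<dots> \<le> Phi E i K p r"
    unfolding Phi_def using cms_finite[OF cms] e by (intro member_le_sum) auto
  finally show ?thesis .
qed

lemma ratio_bound:
  assumes cms: "cms N E i t K w p a" and \<delta>: "\<delta> > 0" "\<forall>e\<in>E. \<forall>y\<in>K (i e). p e y \<ge> \<delta>"
    and sp: "sp N K x y" and es: "set es \<subseteq> E"
    and good: "\<forall>k<length es. dist (trj w x (take k es)) (trj w y (take k es)) \<le> r k"
  shows "cylprob w p x es \<le> (\<Prod>k<length es. 1 + Phi E i K p (r k) / \<delta>) * cylprob w p y es"
  using sp es good
proof (induction es arbitrary: x y r)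
  case Nil
  then show ?case by simp
next
  case (Cons e es)
  have pnn: "\<forall>e\<in>E. \<forall>y. 0 \<le> p e y" using cms_pnn[OF cms] .
  have eE: "e \<in> E" and esE: "set es \<subseteq> E" using Cons.prems by auto
  have P0: "0 \<le> (\<Prod>k<length es. 1 + Phi E i K p (r (Suc k)) / \<delta>)"
  proof (intro prod_nonneg)
    fix k
    have "0 \<le> Phi E i K p (r (Suc k)) / \<delta>" using \<delta>(1) Phi_nonneg[of E i K p "r (Suc k)"] by simp
    then show "0 \<le> 1 + Phi E i K p (r (Suc k)) / \<delta>" by linarith
  qed
  have F0: "0 \<le> 1 + Phi E i K p (r 0) / \<delta>"
  proof -
    have "0 \<le> Phi E i K p (r 0) / \<delta>" using \<delta>(1) Phi_nonneg[of E i K p "r 0"] by simp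
    then show ?thesis by linarith
  qed
  have prodeq: "(\<Prod>k<length (e # es). 1 + Phi E i K p (r k) / \<delta>) =
      (1 + Phi E i K p (r 0) / \<delta>) * (\<Prod>k<length es. 1 + Phi E i K p (r (Suc k)) / \<delta>)"
    unfolding length_Cons by (rule prod.lessThan_Suc_shift)
  show ?case
  proof (cases "p e x = 0")
    case True
    have "0 \<le> cylprob w p y (e # es)" using pnn Cons.prems by (intro cylprob_nonneg[of E]) auto
    then show ?thesis using True P0 F0 prodeq by simp
  next
    case False
    from cms_step[OF cms Cons.prems(1) eE False]
    have xK: "x \<in> K (i e)" and yK: "y \<in> K (i e)" and spn: "sp N K (w e x) (w e y)" by auto
    have d0: "dist x y \<le> r 0" using Cons.prems(3) by (auto dest: spec[of _ 0])
    have py: "\<delta> \<le> p e y" using \<delta>(2) eE yK by auto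
    have "p e x \<le> p e y + Phi E i K p (r 0)"
      using p_diff_le_Phi[OF cms eE xK yK d0] by simp
    also have "\<dots> \<le> p e y * (1 + Phi E i K p (r 0) / \<delta>)"
    proof -
      have "Phi E i K p (r 0) \<le> p e y * (Phi E i K p (r 0) / \<delta>)"
        using py \<delta>(1) Phi_nonneg[of E i K p "r 0"]
        by (simp add: field_simps mult_right_mono)
      then show ?thesis by (simp add: algebra_simps)
    qed
    finally have pe: "p e x \<le> p e y * (1 + Phi E i K p (r 0) / \<delta>)" .
    have IH: "cylprob w p (w e x) es \<le> (\<Prod>k<length es. 1 + Phi E i K p (r (Suc k)) / \<delta>) * cylprob w p (w e y) es"
    proof (rule Cons.IH[OF spn esE])
      show "\<forall>k<length es. dist (trj w (w e x) (take k es)) (trj w (w e y) (take k es)) \<le> r (Suc k)"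
      proof (intro allI impI)
        fix k assume "k < length es"
        then have "dist (trj w x (take (Suc k) (e # es))) (trj w y (take (Suc k) (e # es))) \<le> r (Suc k)"
          using Cons.prems(3) by auto
        then show "dist (trj w (w e x) (take k es)) (trj w (w e y) (take k es)) \<le> r (Suc k)" by simp
      qed
    qed
    have c1: "0 \<le> cylprob w p (w e x) es" using pnn esE by (intro cylprob_nonneg[of E]) auto
    have "cylprob w p x (e # es) = p e x * cylprob w p (w e x) es" by simp
    also have "\<dots> \<le> (p e y * (1 + Phi E i K p (r 0) / \<delta>)) *
        ((\<Prod>k<length es. 1 + Phi E i K p (r (Suc k)) / \<delta>) * cylprob w p (w e y) es)"
      using pe IH c1 pnn eE F0 by (intro mult_mono) auto
    also have "\<dots> = (\<Prod>k<length (e # es). 1 + Phi E i K p (r k) / \<delta>) * cylprob w p y (e # es)"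
      unfolding prodeq by (simp add: mult_ac)
    finally show ?thesis .
  qed
qed


section \<open>Dini condition gives summability along geometric sequences\<close>

lemma dini_summable:
  fixes g :: "real \<Rightarrow> real"
  assumes mono: "mono g" and g0: "\<And>r. 0 \<le> g r" and c: "c > 0"
    and dini: "(\<integral>\<^sup>+ r \<in> {0<..c}. ennreal (g r) / ennreal r \<partial>lborel) < \<infinity>"
    and R: "R > 0" and b: "0 < b" "b < 1"
  shows "summable (\<lambda>k. g (R * b ^ k))"
proof -
  obtain K0 where K0: "b ^ K0 < c / R" using real_arch_pow_inv[of "c / R" b] c R b by auto
  define hi where "hi k = R * b ^ (K0 + k)" for k
  define lo where "lo k = R * b ^ (K0 + k + 1)" for k
  define I where "I k = {lo k<..hi k}" for k
  define h where "h r = ennreal (g r) / ennreal r" for r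
  have gmeas: "g \<in> borel_measurable borel" using mono by (rule borel_measurable_mono)
  have hmeas: "h \<in> borel_measurable lborel" unfolding h_def using gmeas by measurable
  have lo_hi: "lo k = hi k * b" for k by (simp add: lo_def hi_def)
  have hi_pos: "0 < hi k" for k using R b by (simp add: hi_def)
  have hi_c: "hi k < c" for k
  proof -
    have "b ^ (K0 + k) \<le> b ^ K0" using b by (intro power_decreasing) auto
    then have "hi k \<le> R * b ^ K0" using R by (simp add: hi_def)
    also have "\<dots> < c" using K0 R by (simp add: field_simps)
    finally show ?thesis .
  qed
  have lo_pos: "0 < lo k" for k using hi_pos b by (simp add: lo_hi)
  have hi_Suc: "hi (Suc k) = lo k" for k by (simp add: hi_def lo_def)
  have hi_anti: "k \<le> k' \<Longrightarrow> hi k' \<le> hi k" for k k'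
    using R b by (simp add: hi_def power_decreasing)
  have disj: "disjoint_family I"
    unfolding disjoint_family_on_def
  proof (intro ballI impI)
    fix k k' :: nat assume "k \<noteq> k'"
    then consider "k < k'" | "k' < k" by linarith
    then show "I k \<inter> I k' = {}"
    proof cases
      case 1
      then have "hi k' \<le> lo k" using hi_anti[of "Suc k" k'] hi_Suc by simp
      then show ?thesis by (auto simp: I_def)
    next
      case 2
      then have "hi k \<le> lo k'" using hi_anti[of "Suc k'" k] hi_Suc by simp
      then show ?thesis by (auto simp: I_def)
    qed
  qed
  have UI: "(\<Union>k. I k) \<subseteq> {0<..c}"
  proof
    fix r assume "r \<in> (\<Union>k. I k)"
    then obtain k where "lo k < r" "r \<le> hi k" by (auto simp: I_def)
    then show "r \<in> {0<..c}" using lo_pos[of k] hi_c[of k] by auto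
  qed
  have step: "ennreal (g (lo k) * (1 - b)) \<le> (\<integral>\<^sup>+ r. h r * indicator (I k) r \<partial>lborel)" for k
  proof -
    have "(\<integral>\<^sup>+ r. ennreal (g (lo k) / hi k) * indicator (I k) r \<partial>lborel) \<le> (\<integral>\<^sup>+ r. h r * indicator (I k) r \<partial>lborel)"
    proof (rule nn_integral_mono)
      fix r
      show "ennreal (g (lo k) / hi k) * indicator (I k) r \<le> h r * indicator (I k) r"
      proof (cases "r \<in> I k")
        case True
        then have r: "lo k < r" "r \<le> hi k" by (auto simp: I_def)
        have rpos: "0 < r" using r lo_pos[of k] by linarith
        have "g (lo k) \<le> g r" using monoD[OF mono, of "lo k" r] r(1) by simp
        then have "g (lo k) / hi k \<le> g r / r"
          using r rpos hi_pos[of k] g0[of "lo k"] g0[of r]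
          by (meson divide_left_mono dual_order.trans frac_le less_eq_real_def)
        then have "ennreal (g (lo k) / hi k) \<le> ennreal (g r / r)" by (rule ennreal_leI)
        also have "\<dots> = h r" unfolding h_def using rpos g0[of r] by (simp add: divide_ennreal)
        finally show ?thesis using True by simp
      qed simp
    qed
    moreover have "(\<integral>\<^sup>+ r. ennreal (g (lo k) / hi k) * indicator (I k) r \<partial>lborel) = ennreal (g (lo k) * (1 - b))"
    proof -
      have "(\<integral>\<^sup>+ r. ennreal (g (lo k) / hi k) * indicator (I k) r \<partial>lborel)
          = ennreal (g (lo k) / hi k) * emeasure lborel (I k)"
        by (rule nn_integral_cmult_indicator) (simp add: I_def)
      also have "\<dots> = ennreal (g (lo k) / hi k) * ennreal (hi k - lo k)"
        using lo_hi[of k] hi_pos[of k] b by (simp add: I_def)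
      also have "\<dots> = ennreal (g (lo k) / hi k * (hi k - lo k))"
      proof (rule ennreal_mult[symmetric])
        show "0 \<le> g (lo k) / hi k" using g0[of "lo k"] hi_pos[of k] by simp
        show "0 \<le> hi k - lo k" using hi_pos[of k] lo_hi[of k] b by (simp add: mult_left_le)
      qed
      also have "g (lo k) / hi k * (hi k - lo k) = g (lo k) * (1 - b)"
        using hi_pos[of k] lo_hi[of k] by (simp add: field_simps)
      finally show ?thesis .
    qed
    ultimately show ?thesis by simp
  qed
  have "(\<Sum>k. ennreal (g (lo k) * (1 - b))) \<le> (\<Sum>k. \<integral>\<^sup>+ r. h r * indicator (I k) r \<partial>lborel)"
    using step by (intro suminf_le) auto
  also have "\<dots> = (\<integral>\<^sup>+ r. (\<Sum>k. h r * indicator (I k) r) \<partial>lborel)"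
    using hmeas by (intro nn_integral_suminf[symmetric]) (auto simp: I_def)
  also have "\<dots> = (\<integral>\<^sup>+ r. h r * indicator (\<Union>k. I k) r \<partial>lborel)"
    by (simp add: ennreal_suminf_cmult suminf_indicator[OF disj])
  also have "\<dots> \<le> (\<integral>\<^sup>+ r. h r * indicator {0<..c} r \<partial>lborel)"
  proof (intro nn_integral_mono mult_left_mono)
    fix r
    have "r \<in> (\<Union>k. I k) \<Longrightarrow> r \<in> {0<..c}" using UI by blast
    then show "indicator (\<Union>k. I k) r \<le> (indicator {0<..c} r :: ennreal)"
      by (auto split: split_indicator)
  qed simp
  also have "\<dots> < \<infinity>" using dini by (simp add: h_def)
  finally have fin: "(\<Sum>k. ennreal (g (lo k) * (1 - b))) \<noteq> \<top>" by simp
  have "summable (\<lambda>k. g (lo k) * (1 - b))"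
    using fin g0 b by (intro summable_suminf_not_top) auto
  then have "summable (\<lambda>k. g (lo k) * (1 - b) / (1 - b))" by (rule summable_divide)
  then have "summable (\<lambda>k. g (R * b ^ (k + (K0 + 1))))"
    using b by (simp add: lo_def add.commute add.left_commute)
  then show ?thesis by (subst (asm) summable_iff_shift)
qed


lemma dini_Phi_summable:
  assumes cms: "cms N E i t K w p a" and dini: "\<forall>e\<in>E. dini_continuous_on (K (i e)) (p e)"
    and R: "R > 0" and b: "0 < b" "b < 1"
  shows "summable (\<lambda>k. Phi E i K p (R * b ^ k))"
  unfolding Phi_def
proof (rule summable_sum)
  fix e assume e: "e \<in> E"
  define g where "g r = enn2real (modulus (K (i e)) (p e) r)" for r
  have le1: "modulus (K (i e)) (p e) r \<le> 1" for r
    using cms_p_le1[OF cms e] by (intro modulus_le1) auto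
  have lt: "modulus (K (i e)) (p e) r < \<top>" for r
    using le1[of r] by (rule le_less_trans) simp
  have eq: "ennreal (g r) = modulus (K (i e)) (p e) r" for r
    unfolding g_def using lt[of r] by simp
  have mono: "mono g"
  proof (rule monoI)
    fix r r' :: real assume "r \<le> r'"
    then show "g r \<le> g r'" unfolding g_def
      using lt[of r'] by (intro enn2real_mono modulus_mono) auto
  qed
  obtain c where c: "c > 0" "(\<integral>\<^sup>+ r \<in> {0<..c}. modulus (K (i e)) (p e) r / ennreal r \<partial>lborel) < \<infinity>"
    using dini e by (auto simp: dini_continuous_on_def)
  have "summable (\<lambda>k. g (R * b ^ k))"
  proof (rule dini_summable[of g c R b])
    show "\<And>r. 0 \<le> g r" by (simp add: g_def)
  qed (use mono c R b in \<open>auto simp: eq\<close>)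
  then show "summable (\<lambda>k. enn2real (modulus (K (i e)) (p e) (R * b ^ k)))"
    by (simp add: g_def)
qed

lemma prod_bound:
  fixes f :: "nat \<Rightarrow> real"
  assumes f0: "\<And>k. 0 \<le> f k" and sf: "summable f" and \<delta>: "\<delta> > 0"
  shows "(\<Prod>k<n. 1 + f k / \<delta>) \<le> exp ((\<Sum>k. f k) / \<delta>)"
proof -
  have "(\<Prod>k<n. 1 + f k / \<delta>) \<le> (\<Prod>k<n. exp (f k / \<delta>))"
  proof (rule prod_mono)
    fix k
    have "0 \<le> f k / \<delta>" using f0[of k] \<delta> by simp
    then show "0 \<le> 1 + f k / \<delta> \<and> 1 + f k / \<delta> \<le> exp (f k / \<delta>)" by simp
  qed
  also have "\<dots> = exp (\<Sum>k<n. f k / \<delta>)" by (simp add: exp_sum)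
  also have "\<dots> = exp ((\<Sum>k<n. f k) / \<delta>)" by (simp add: sum_divide_distrib)
  also have "\<dots> \<le> exp ((\<Sum>k. f k) / \<delta>)"
    using sum_le_suminf[OF sf, of "{..<n}"] f0 \<delta> by (simp add: divide_right_mono)
  finally show ?thesis .
qed


lemma key:
  assumes cms: "cms N E i t K w p a" and dini: "\<forall>e\<in>E. dini_continuous_on (K (i e)) (p e)"
    and \<delta>: "\<delta> > 0" "\<forall>e\<in>E. \<forall>y\<in>K (i e). p e y \<ge> \<delta>"
    and sp: "sp N K x y"
    and P: "is_Pm E w p m x P" and Q: "is_Pm E w p m y Q"
    and A: "A \<in> sets (Am E m)" and QA: "emeasure Q A = 0"
  shows "emeasure P A = 0"
proof -
  have fin: "finite E" using cms_finite[OF cms] .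
  have pnn: "\<forall>e\<in>E. \<forall>y. 0 \<le> p e y" using cms_pnn[OF cms] .
  have a: "0 < a" "a < 1" using cms by (auto simp: cms_def)
  define b where "b = sqrt a"
  have b: "0 < b" "b < 1" "b ^ 2 = a" using a by (auto simp: b_def)
  have sP: "sets P = sets (Am E m)" using P by (simp add: is_Pm_def)
  have sQ: "sets Q = sets (Am E m)" using Q by (simp add: is_Pm_def)
  have spP: "space P = Sig E" using isPm_space[OF P] .
  have spQ: "space Q = Sig E" using isPm_space[OF Q] .
  have ASig: "A \<subseteq> Sig E" using sets.sets_into_space[OF A] by (simp add: space_Am)
  have bound: "emeasure P A \<le> ennreal (dist x y / (R * (1 - b)))" if R: "R > 0" for R
  proof -
    define r where "r k = R * b ^ k" for k
    define Good where "Good n = {es \<in> lsts E n. \<forall>k<n. dist (trj w x (take k es)) (trj w y (take k es)) \<le> r k}" for n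
    define G where "G = (\<Inter>n. Bs E m n (Good n))"
    define Bad where "Bad n = Bs E m n {es. dist (trj w x es) (trj w y es) > r n}" for n
    define Cst where "Cst = exp ((\<Sum>k. Phi E i K p (r k)) / \<delta>)"
    have Gs: "G \<in> sets (Am E m)" unfolding G_def using Bs_Am[OF fin] by auto
    have Bads: "Bad n \<in> sets (Am E m)" for n unfolding Bad_def using Bs_Am[OF fin] by auto
    have GBad: "Sig E - G \<subseteq> (\<Union>n. Bad n)"
    proof
      fix \<sigma> assume \<sigma>: "\<sigma> \<in> Sig E - G"
      then obtain n where "\<sigma> \<notin> Bs E m n (Good n)" by (auto simp: G_def)
      then have "pre m n \<sigma> \<notin> Good n" using \<sigma> by (auto simp: Bs_def)
      then obtain k where k: "k < n" "\<not> dist (trj w x (take k (pre m n \<sigma>))) (trj w y (take k (pre m n \<sigma>))) \<le> r k"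
        using pre_in_lsts[of \<sigma> E m n] \<sigma> by (auto simp: Good_def)
      then have "dist (trj w x (pre m k \<sigma>)) (trj w y (pre m k \<sigma>)) > r k"
        by (simp add: take_pre)
      then have "\<sigma> \<in> Bad k" using \<sigma> by (auto simp: Bad_def Bs_def)
      then show "\<sigma> \<in> (\<Union>n. Bad n)" by blast
    qed
    have PBad: "emeasure P (Bad n) \<le> ennreal (b ^ n * dist x y / R)" for n
    proof -
      let ?S = "lsts E n \<inter> {es. dist (trj w x es) (trj w y es) > R * b ^ n}"
      have "emeasure P (Bad n) = (\<Sum>es\<in>{es. dist (trj w x es) (trj w y es) > r n} \<inter> lsts E n. ennreal (cylprob w p x es))"
        unfolding Bad_def by (rule Bs_emeasure[OF P fin])
      also have "\<dots> = (\<Sum>es\<in>?S. ennreal (cylprob w p x es))"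
        by (simp add: r_def Int_commute)
      also have "\<dots> = ennreal (\<Sum>es\<in>?S. cylprob w p x es)"
        using pnn by (intro sum_ennreal) (auto intro!: cylprob_nonneg[of E] simp: lsts_def)
      also have "\<dots> \<le> ennreal (b ^ n * dist x y / R)"
        using bad_prob[OF cms sp R b(1) b(3), of n] by (rule ennreal_leI)
      finally show ?thesis .
    qed
    have PnG: "emeasure P (Sig E - G) \<le> ennreal (dist x y / (R * (1 - b)))"
    proof -
      have "emeasure P (Sig E - G) \<le> emeasure P (\<Union>n. Bad n)"
        using GBad Bads sP by (intro emeasure_mono) auto
      also have "\<dots> \<le> (\<Sum>n. emeasure P (Bad n))"
        using Bads sP by (intro emeasure_subadditive_countably) auto
      also have "\<dots> \<le> (\<Sum>n. ennreal (b ^ n * dist x y / R))"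
        using PBad by (intro suminf_le) auto
      also have "\<dots> = ennreal (\<Sum>n. b ^ n * dist x y / R)"
      proof (rule suminf_ennreal2)
        show "\<And>n. 0 \<le> b ^ n * dist x y / R" using b R by simp
        show "summable (\<lambda>n. b ^ n * dist x y / R)"
          using b by (intro summable_divide summable_mult2 summable_geometric) simp
      qed
      also have "(\<Sum>n. b ^ n * dist x y / R) = dist x y / (R * (1 - b))"
      proof -
        have "(\<Sum>n. b ^ n * (dist x y / R)) = (\<Sum>n. b ^ n) * (dist x y / R)"
          using b by (intro suminf_mult2[symmetric] summable_geometric) simp
        also have "\<dots> = dist x y / (R * (1 - b))"
          using b by (subst suminf_geometric) (auto simp: field_simps)
        finally show ?thesis by simp
      qed
      finally show ?thesis .
    qed
    have Cpos: "0 < Cst" by (simp add: Cst_def)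
    have sumPhi: "summable (\<lambda>k. Phi E i K p (r k))"
      unfolding r_def using dini_Phi_summable[OF cms dini R b(1) b(2)] .
    have ratio: "cylprob w p x es \<le> Cst * cylprob w p y es" if es: "es \<in> Good n" for es n
    proof -
      have es': "set es \<subseteq> E" "length es = n" using es by (auto simp: Good_def lsts_def)
      have "cylprob w p x es \<le> (\<Prod>k<length es. 1 + Phi E i K p (r k) / \<delta>) * cylprob w p y es"
        using es es' by (intro ratio_bound[OF cms \<delta> sp]) (auto simp: Good_def)
      also have "\<dots> \<le> Cst * cylprob w p y es"
        unfolding Cst_def
        using prod_bound[OF Phi_nonneg sumPhi \<delta>(1), of "length es"] cylprob_nonneg[OF pnn es'(1)]
        by (intro mult_right_mono) auto
      finally show ?thesis .
    qed
    have perset: "emeasure P (B \<inter> G) \<le> ennreal Cst * emeasure Q B" if B: "B \<in> RB E m" for B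
    proof -
      obtain n L where BL: "B = Bs E m n L" using B by (auto simp: RB_def)
      have "B \<inter> G \<subseteq> Bs E m n (L \<inter> Good n)" unfolding BL G_def by (auto simp: Bs_def)
      then have "emeasure P (B \<inter> G) \<le> emeasure P (Bs E m n (L \<inter> Good n))"
        using Bs_Am[OF fin] sP by (intro emeasure_mono) auto
      also have "\<dots> = (\<Sum>es\<in>(L \<inter> Good n) \<inter> lsts E n. ennreal (cylprob w p x es))"
        by (rule Bs_emeasure[OF P fin])
      also have "\<dots> \<le> (\<Sum>es\<in>(L \<inter> Good n) \<inter> lsts E n. ennreal (Cst * cylprob w p y es))"
        using ratio by (intro sum_mono ennreal_leI) auto
      also have "\<dots> \<le> (\<Sum>es\<in>L \<inter> lsts E n. ennreal (Cst * cylprob w p y es))"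
        using finite_lsts[OF fin] by (intro sum_mono2) auto
      also have "\<dots> = (\<Sum>es\<in>L \<inter> lsts E n. ennreal Cst * ennreal (cylprob w p y es))"
        using Cpos by (intro sum.cong refl) (simp add: ennreal_mult')
      also have "\<dots> = ennreal Cst * emeasure Q B"
        unfolding BL Bs_emeasure[OF Q fin] by (simp add: sum_distrib_left)
      finally show ?thesis .
    qed
    have RBsets: "RB E m \<subseteq> sets (Am E m)" using sets_Am_RB[OF fin] by auto
    have PAG: "emeasure P (A \<inter> G) = 0"
    proof -
      interpret RB: ring_of_sets "Sig E" "RB E m" by (rule ring_RB)
      have outer: "emeasure Q A = outer_measure (RB E m) (emeasure Q) A"
      proof (rule emeasure_outer[OF ring_RB _ Sig_RB])
        show "sets Q = sigma_sets (Sig E) (RB E m)" using sQ sets_Am_RB[OF fin] by simp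
        show "emeasure Q (Sig E) \<noteq> \<infinity>" using Q spQ by (simp add: is_Pm_def)
        show "A \<in> sets Q" using A sQ by simp
      qed
      have "emeasure P (A \<inter> G) \<le> 0 + ennreal e" if e: "0 < e" for e
      proof -
        have "outer_measure (RB E m) (emeasure Q) A < ennreal (e / Cst)"
          using outer QA e Cpos by simp
        from RB.outer_measure_close[OF this] obtain C where
          C: "range C \<subseteq> RB E m" "disjoint_family C" "A \<subseteq> (\<Union>i. C i)"
             "(\<Sum>i. emeasure Q (C i)) < ennreal (e / Cst)" by blast
        have CGs: "C i \<inter> G \<in> sets P" for i using C(1) RBsets Gs sP by auto
        have "emeasure P (A \<inter> G) \<le> emeasure P (\<Union>i. C i \<inter> G)"
        proof (rule emeasure_mono)
          show "A \<inter> G \<subseteq> (\<Union>i. C i \<inter> G)" using C(3) by blast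
          have "(\<Union>i. C i \<inter> G) \<in> sets P" using CGs by (intro sets.countable_UN) auto
          then show "(\<Union>i. C i \<inter> G) \<in> sets P" by simp
        qed
        also have "\<dots> \<le> (\<Sum>i. emeasure P (C i \<inter> G))"
          using CGs by (intro emeasure_subadditive_countably) auto
        also have "\<dots> \<le> (\<Sum>i. ennreal Cst * emeasure Q (C i))"
          using C(1) perset by (intro suminf_le) auto
        also have "\<dots> = ennreal Cst * (\<Sum>i. emeasure Q (C i))"
          by (rule ennreal_suminf_cmult)
        also have "\<dots> \<le> ennreal Cst * ennreal (e / Cst)"
          using C(4) by (intro mult_left_mono) auto
        also have "\<dots> = ennreal e"
          using Cpos e by (simp add: ennreal_mult[symmetric])
        finally show ?thesis by simp
      qed
      then have "emeasure P (A \<inter> G) \<le> 0" by (rule ennreal_le_epsilon) auto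
      then show ?thesis by simp
    qed
    have SG: "Sig E - G \<in> sets (Am E m)" using sets.compl_sets[OF Gs] by (simp add: space_Am)
    have AG: "A \<inter> G \<in> sets (Am E m)" using A Gs by auto
    have "emeasure P A \<le> emeasure P ((A \<inter> G) \<union> (Sig E - G))"
      using ASig SG AG sP by (intro emeasure_mono) auto
    also have "\<dots> \<le> emeasure P (A \<inter> G) + emeasure P (Sig E - G)"
      using SG AG sP by (intro emeasure_subadditive) auto
    also have "\<dots> \<le> ennreal (dist x y / (R * (1 - b)))"
      using PAG PnG by simp
    finally show ?thesis .
  qed
  have "emeasure P A \<le> 0 + ennreal e" if e: "0 < e" for e
  proof -
    define R where "R = (dist x y + 1) / (e * (1 - b))"
    have R: "R > 0" unfolding R_def
    proof (rule divide_pos_pos)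
      show "0 < dist x y + 1" by (simp add: add_nonneg_pos)
      show "0 < e * (1 - b)" using e b by simp
    qed
    have R1: "R * (1 - b) = (dist x y + 1) / e" using e b by (simp add: R_def)
    have d1: "0 < dist x y + 1" by (simp add: add_nonneg_pos)
    have "dist x y / (R * (1 - b)) = dist x y * e / (dist x y + 1)"
      unfolding R1 by simp
    also have "\<dots> \<le> e"
      using e d1 by (simp add: divide_le_eq algebra_simps)
    finally have "ennreal (dist x y / (R * (1 - b))) \<le> ennreal e" by (rule ennreal_leI)
    then show ?thesis using bound[OF R] by simp
  qed
  then have "emeasure P A \<le> 0" by (rule ennreal_le_epsilon) auto
  then show ?thesis by simp
qed


lemma sigma_algebra_Am: "sigma_algebra (Sig E) (sets (Am E m))"
  using sets.sigma_algebra_axioms[of "Am E m"] by (simp add: space_Am)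

lemma sets_Pm_mix: "sets (Pm_mix N E w p m xs) = sets (Am E m)"
  unfolding Pm_mix_def by (rule sigma_algebra.sets_measure_of_eq[OF sigma_algebra_Am])

lemma emeasure_Pm_mix:
  assumes cms: "cms N E i t K w p a" and A: "A \<in> sets (Am E m)"
  shows "emeasure (Pm_mix N E w p m xs) A = (\<Sum>j = 1..N. emeasure (Pm E w p m (xs j)) A) / of_nat N"
  unfolding Pm_mix_def
proof (rule emeasure_measure_of_sigma[OF sigma_algebra_Am _ _ A])
  have sPj: "sets (Pm E w p m (xs j)) = sets (Am E m)" for j
    using Pm_is[OF cms] by (simp add: is_Pm_def)
  show "positive (sets (Am E m)) (\<lambda>A. (\<Sum>j = 1..N. emeasure (Pm E w p m (xs j)) A) / of_nat N)"
    by (simp add: positive_def)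
  show "countably_additive (sets (Am E m)) (\<lambda>A. (\<Sum>j = 1..N. emeasure (Pm E w p m (xs j)) A) / of_nat N)"
    unfolding countably_additive_def
  proof (intro allI impI)
    fix F :: "nat \<Rightarrow> _" assume F: "range F \<subseteq> sets (Am E m)" "disjoint_family F" "\<Union> (range F) \<in> sets (Am E m)"
    have "(\<Sum>i. (\<Sum>j = 1..N. emeasure (Pm E w p m (xs j)) (F i)) / of_nat N)
        = (\<Sum>i. (\<Sum>j = 1..N. emeasure (Pm E w p m (xs j)) (F i))) / of_nat N"
      by (simp add: divide_ennreal_def ennreal_suminf_multc)
    also have "(\<Sum>i. (\<Sum>j = 1..N. emeasure (Pm E w p m (xs j)) (F i))) = (\<Sum>j = 1..N. \<Sum>i. emeasure (Pm E w p m (xs j)) (F i))"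
      by (rule suminf_sum) (rule summableI)
    also have "\<dots> = (\<Sum>j = 1..N. emeasure (Pm E w p m (xs j)) (\<Union> (range F)))"
      using F by (intro sum.cong refl suminf_emeasure) (auto simp: sPj)
    finally show "(\<Sum>i. (\<Sum>j = 1..N. emeasure (Pm E w p m (xs j)) (F i)) / of_nat N) =
        (\<Sum>j = 1..N. emeasure (Pm E w p m (xs j)) (\<Union> (range F))) / of_nat N" .
  qed
qed

theorem lemma6:
  fixes N :: nat and E :: "'e set" and i t :: "'e \<Rightarrow> nat"
    and K :: "nat \<Rightarrow> 'a::complete_space set" and w :: "'e \<Rightarrow> 'a \<Rightarrow> 'a"
    and p :: "'e \<Rightarrow> 'a \<Rightarrow> real" and a :: real
    and xs :: "nat \<Rightarrow> 'a" and x :: 'a and m :: int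
  assumes "cms N E i t K w p a"
    and "\<forall>e\<in>E. dini_continuous_on (K (i e)) (p e)"
    and "\<exists>\<delta>>0. \<forall>e\<in>E. \<forall>y\<in>K (i e). p e y \<ge> \<delta>"
    and "\<forall>j\<in>{1..N}. xs j \<in> K j"
    and "m \<le> 0"
  shows "absolutely_continuous (Pm_mix N E w p m xs) (Pm E w p m x)"
  unfolding absolutely_continuous_def
proof
  note cms = assms(1)
  obtain \<delta> where \<delta>: "\<delta> > 0" "\<forall>e\<in>E. \<forall>y\<in>K (i e). p e y \<ge> \<delta>" using assms(3) by blast
  fix A assume "A \<in> null_sets (Pm_mix N E w p m xs)"
  then have A: "A \<in> sets (Am E m)" and A0: "emeasure (Pm_mix N E w p m xs) A = 0"
    by (auto simp: sets_Pm_mix)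
  have "(\<Sum>j = 1..N. emeasure (Pm E w p m (xs j)) A) / of_nat N = 0"
    using A0 emeasure_Pm_mix[OF cms A] by simp
  then have "(\<Sum>j = 1..N. emeasure (Pm E w p m (xs j)) A) = 0"
    by (simp add: ennreal_of_nat_neq_top)
  then have Aj: "\<forall>j\<in>{1..N}. emeasure (Pm E w p m (xs j)) A = 0" by simp
  have "x \<in> (\<Union>j\<in>{1..N}. K j)" using cms by (simp add: cms_def)
  then obtain j where j: "j \<in> {1..N}" "x \<in> K j" by blast
  have sp: "sp N K x (xs j)" using j assms(4) by (auto simp: sp_def)
  have "emeasure (Pm E w p m x) A = 0"
    using key[OF cms assms(2) \<delta> sp Pm_is[OF cms] Pm_is[OF cms] A] Aj j by blast
  moreover have "A \<in> sets (Pm E w p m x)" using A Pm_is[OF cms, of m x] by (simp add: is_Pm_def)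
  ultimately show "A \<in> null_sets (Pm E w p m x)" by (simp add: null_sets_def)
qed

end
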